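(* In the two-block Spice setting, at any iteration $k$ (with $\mathsf{R}(u^k)>0$ and $\mathsf{R}(\bar u^k)>0$), $H_k=Q_kM_k^{-1}\succ0$ and $G_k=Q_k^\top+Q_k-M_k^\top H_kM_k\succ0$ (with $H_k$, $G_k$ equal to the explicit matrices given in the context), and $$\rho[\vartheta(u)-\vartheta(\bar u^k)]+(w-\bar w^k)^\top\tfrac{1}{\eta_k}\Gamma(\bar w^k)\ \ge\ \tfrac12\big(\|w-w^{k+1}\|_{H_k}^2-\|w-w^k\|_{H_k}^2\big)+\tfrac12\|\bar w^k-w^k\|_{G_k}^2\qquad\forall\,w\in\Omega .$$
   Context: Two-block Spice setting. Let $\mathcal{X}\subseteq\mathbb{R}^n$, $\mathcal{Y}\subseteq\mathbb{R}^m$ be nonempty closed convex sets; $f:\mathbb{R}^n\to\mathbb{R}$, $g:\mathbb{R}^m\to\mathbb{R}$ convex; $\phi_1,\dots,\phi_p:\mathbb{R}^n\to\mathbb{R}$ and $\psi_1,\dots,\psi_p:\mathbb{R}^m\to\mathbb{R}$ convex and continuously differentiable; $\Phi=(\phi_1,\dots,\phi_p)^\top$, $\Psi=(\psi_1,\dots,\psi_p)^\top$ with Jacobians $\mathcal{D}\Phi(x)\in\mathbb{R}^{p\times n}$, $\mathcal{D}\Psi(y)\in\mathbb{R}^{p\times m}$. Let $\mathcal{Z}=\mathbb{R}^p_+$, $\Omega=\mathcal{X}\times\mathcal{Y}\times\mathcal{Z}$, $u=(x,y)$, $w=(x,y,\lambda)$, $\vartheta(u)=f(x)+g(y)$, $\Gamma(w)=(\mathcal{D}\Phi(x)^\top\lambda,\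 \mathcal{D}\Psi(y)^\top\lambda,\ -\Phi(x)-\Psi(y))$. For symmetric $A$, $\|v\|_A^2:=v^\top Av$; matrix norms are spectral norms; $\mathsf{R}(u):=\|\mathcal{D}\Phi(x)\|^2+\|\mathcal{D}\Psi(y)\|^2$. Fix $\rho>0$, $\mu>1$, $w^0=(x^0,y^0,\lambda^0)\in\Omega$ and positive $\eta_0,\eta_1,\dots$. Given $w^k=(x^k,y^k,\lambda^k)$, iteration $k$ is: $r_k=\frac{1}{\eta_k}\sqrt{\mathsf{R}(u^k)}$; $\bar x^k=\arg\min_{x\in\mathcal{X}}\{\rho f(x)+\frac{1}{\eta_k}(\lambda^k)^\top\Phi(x)+\frac{r_k}{2}\|x-x^k\|^2\}$; $\bar y^k=\arg\min_{y\in\mathcal{Y}}\{\rho g(y)+\frac{1}{\eta_k}(\lambda^k)^\top\Psi(y)+\frac{r_k}{2}\|y-y^k\|^2\}$; $\bar u^k=(\bar x^k,\bar y^k)$; $s_k=\frac{\mu\mathsf{R}(\bar u^k)}{\eta_k\sqrt{\mathsf{R}(u^k)}}$; $\bar\lambda^k=\arg\max_{\lambda\in\mathcal{Z}}\{\frac{1}{\eta_k}\lambda^\top[\Phi(\bar x^k)+\Psi(\bar y^k)]-\frac{s_k}{2}\|\lambda-\lambda^k\|^2\}=\max\{\lambda^k+\frac{1}{\eta_ks_k}(\Phi(\bar x^k)+\Psi(\bar y^k)),0\}$; $\bar w^k=(\bar x^k,\bar y^k,\bar\lambda^k)$; $w^{k+1}=w^k-M_k(w^k-\bar w^k)$ with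 $M_k=\begin{pmatrix}I_n&0&-\frac{1}{\eta_kr_k}\mathcal{D}\Phi(\bar x^k)^\top\\0&I_m&-\frac{1}{\eta_kr_k}\mathcal{D}\Psi(\bar y^k)^\top\\0&0&I_p\end{pmatrix}$. It is assumed that $\mathsf{R}(u^k)>0$, $\mathsf{R}(\bar u^k)>0$ for all $k$. Define $Q_k=\begin{pmatrix}r_kI_n&0&-\frac{1}{\eta_k}\mathcal{D}\Phi(\bar x^k)^\top\\0&r_kI_m&-\frac{1}{\eta_k}\mathcal{D}\Psi(\bar y^k)^\top\\0&0&s_kI_p\end{pmatrix}$, $H_k=\mathrm{diag}(r_kI_n,r_kI_m,s_kI_p)$, $G_k=\mathrm{diag}\big(r_kI_n,\ r_kI_m,\ s_kI_p-\frac{1}{\eta_k^2r_k}[\mathcal{D}\Phi(\bar x^k)\mathcal{D}\Phi(\bar x^k)^\top+\mathcal{D}\Psi(\bar y^k)\mathcal{D}\Psi(\bar y^k)^\top]\big)$. *)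

theory Defs
  imports "HOL-Analysis.Analysis"
begin

definition specnorm :: "real^'a::finite^'b::finite \<Rightarrow> real" where
  "specnorm A = onorm (\<lambda>v. A *v v)"

definition wvec :: "real^'n::finite \<Rightarrow> real^'m::finite \<Rightarrow> real^'p::finite \<Rightarrow> real^('n + ('m + 'p))" where
  "wvec x y l = (\<chi> i. case i of Inl a \<Rightarrow> x $ a | Inr (Inl b) \<Rightarrow> y $ b | Inr (Inr c) \<Rightarrow> l $ c)"

definition block3 ::
  "real^'n::finite^'n \<Rightarrow> real^'m::finite^'n \<Rightarrow> real^'p::finite^'n \<Rightarrow>
   real^'n^'m \<Rightarrow> real^'m^'m \<Rightarrow> real^'p^'m \<Rightarrow>
   real^'n^'p \<Rightarrow> real^'m^'p \<Rightarrow> real^'p^'p \<Rightarrow> real^('n + ('m + 'p))^('n + ('m + 'p))" where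
  "block3 A11 A12 A13 A21 A22 A23 A31 A32 A33 =
    (\<chi> i j. case i of
       Inl a \<Rightarrow> (case j of Inl b \<Rightarrow> A11$a$b | Inr (Inl b) \<Rightarrow> A12$a$b | Inr (Inr b) \<Rightarrow> A13$a$b)
     | Inr (Inl a) \<Rightarrow> (case j of Inl b \<Rightarrow> A21$a$b | Inr (Inl b) \<Rightarrow> A22$a$b | Inr (Inr b) \<Rightarrow> A23$a$b)
     | Inr (Inr a) \<Rightarrow> (case j of Inl b \<Rightarrow> A31$a$b | Inr (Inl b) \<Rightarrow> A32$a$b | Inr (Inr b) \<Rightarrow> A33$a$b))"

definition qf :: "real^'a::finite^'a \<Rightarrow> real^'a \<Rightarrow> real" where
  "qf A v = v \<bullet> (A *v v)"

definition posdef :: "real^'a::finite^'a \<Rightarrow> bool" where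
  "posdef A \<longleftrightarrow> transpose A = A \<and> (\<forall>v. v \<noteq> 0 \<longrightarrow> v \<bullet> (A *v v) > 0)"

end

theory Submission
  imports Defs
begin


lemma sum_UNIV_Plus: "sum g (UNIV::('a::finite+'b::finite) set) = sum (\<lambda>a. g (Inl a)) UNIV + sum (\<lambda>b. g (Inr b)) UNIV"
  by (subst UNIV_Plus_UNIV[symmetric], subst sum.Plus) (auto simp: o_def)

lemma wvec_inner: "wvec a b c \<bullet> wvec a' b' c' = a \<bullet> a' + b \<bullet> b' + c \<bullet> c'"
  by (simp add: wvec_def inner_vec_def sum_UNIV_Plus)

lemma wvec_diff: "wvec a b c - wvec a' b' c' = wvec (a - a') (b - b') (c - c')"
  by (simp add: wvec_def vec_eq_iff split: sum.splits)

lemma wvec_add: "wvec a b c + wvec a' b' c' = wvec (a + a') (b + b') (c + c')"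
  by (simp add: wvec_def vec_eq_iff split: sum.splits)

lemma wvec_scaleR: "t *\<^sub>R wvec a b c = wvec (t *\<^sub>R a) (t *\<^sub>R b) (t *\<^sub>R c)"
  by (simp add: wvec_def vec_eq_iff split: sum.splits)

lemma wvec_uminus: "- wvec a b c = wvec (- a) (- b) (- c)"
  by (simp add: wvec_def vec_eq_iff split: sum.splits)

lemma wvec_eq: "wvec a b c = wvec a' b' c' \<longleftrightarrow> a = a' \<and> b = b' \<and> c = c'"
  by (auto simp add: wvec_def vec_eq_iff split: sum.splits)

lemma wvec_zero: "(0::real^('n::finite+('m::finite+'p::finite))) = wvec 0 0 0"
  by (simp add: wvec_def vec_eq_iff split: sum.splits)

lemma wvec_surj: "\<exists>a b c. v = wvec a b c"
  apply (rule exI[of _ "\<chi> i. v $ Inl i"], rule exI[of _ "\<chi> i. v $ Inr (Inl i)"], rule exI[of _ "\<chi> i. v $ Inr (Inr i)"])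
  by (simp add: wvec_def vec_eq_iff split: sum.splits)

lemma block3_mv: "block3 A11 A12 A13 A21 A22 A23 A31 A32 A33 *v wvec a b c =
  wvec (A11 *v a + A12 *v b + A13 *v c) (A21 *v a + A22 *v b + A23 *v c) (A31 *v a + A32 *v b + A33 *v c)"
  by (simp add: block3_def wvec_def vec_eq_iff matrix_vector_mult_def sum_UNIV_Plus split: sum.splits)

lemma transpose_block3: "transpose (block3 A11 A12 A13 A21 A22 A23 A31 A32 A33) =
  block3 (transpose A11) (transpose A21) (transpose A31) (transpose A12) (transpose A22) (transpose A32)
   (transpose A13) (transpose A23) (transpose A33)"
  by (simp add: block3_def transpose_def vec_eq_iff split: sum.splits)

lemma transpose_scaleR: "transpose (t *\<^sub>R (A::real^'a::finite^'b::finite)) = t *\<^sub>R transpose A"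
  by (simp add: transpose_def vec_eq_iff)
lemma transpose_zero: "transpose (0::real^'a::finite^'b::finite) = 0"
  by (simp add: transpose_def vec_eq_iff)
lemma transpose_minus: "transpose (- (A::real^'a::finite^'b::finite)) = - transpose A"
  by (simp add: transpose_def vec_eq_iff)

lemma inner_transpose: "(x::real^'a::finite) \<bullet> (transpose A *v y) = (A *v x) \<bullet> y"
  by (metis dot_lmul_matrix inner_commute transpose_transpose vector_transpose_matrix)



lemma matrix_eq_wvec:
  fixes A B :: "real^('n::finite+('m::finite+'p::finite))^('n+('m+'p))"
  assumes "\<And>a b c. A *v wvec a b c = B *v wvec a b c"
  shows "A = B"
  unfolding matrix_eq by (metis assms wvec_surj)

lemma mv_uminus: "(- A) *v x = - (A *v (x::real^'a::finite))"
  by (simp add: matrix_vector_mult_def vec_eq_iff sum_negf)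
lemma mv_scaleR: "(t *\<^sub>R A) *v x = t *\<^sub>R (A *v (x::real^'a::finite))"
  by (simp add: matrix_vector_mult_def vec_eq_iff sum_distrib_left algebra_simps)
lemma mv_add: "(A + B) *v x = A *v x + B *v (x::real^'a::finite)"
  by (simp add: matrix_vector_mult_def vec_eq_iff sum.distrib algebra_simps)
lemma mv_diff: "(A - B) *v x = A *v x - B *v (x::real^'a::finite)"
  by (simp add: matrix_vector_mult_def vec_eq_iff sum_subtractf algebra_simps)

lemmas mvs = mv_uminus mv_scaleR mv_add mv_diff matrix_vector_mul_assoc[symmetric] block3_mv
   wvec_eq wvec_add wvec_diff transpose_block3 transpose_scaleR transpose_zero transpose_minus

lemma M_facts:
  fixes D1 :: "real^'n::finite^'p::finite" and D2 :: "real^'m::finite^'p"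
  assumes r: "r > 0" and s: "s > 0" and e: "e > 0"
  defines "M \<equiv> block3 (mat 1) 0 (- (1 / (e * r)) *\<^sub>R transpose D1)
                               0 (mat 1) (- (1 / (e * r)) *\<^sub>R transpose D2)
                               0 0 (mat 1)"
  and "Q \<equiv> block3 (r *\<^sub>R mat 1) 0 (- (1 / e) *\<^sub>R transpose D1)
                               0 (r *\<^sub>R mat 1) (- (1 / e) *\<^sub>R transpose D2)
                               0 0 (s *\<^sub>R mat 1)"
  and "H \<equiv> block3 (r *\<^sub>R mat 1) 0 0 0 (r *\<^sub>R mat 1) 0 0 0 (s *\<^sub>R mat 1)"
  and "G \<equiv> block3 (r *\<^sub>R mat 1) 0 0 0 (r *\<^sub>R mat 1) 0 0 0
                   (s *\<^sub>R mat 1 - (1 / (e\<^sup>2 * r)) *\<^sub>R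
                      (D1 ** transpose D1 + D2 ** transpose D2))"
  shows "invertible M" "Q = H ** M" "Q ** matrix_inv M = H" "transpose H = H"
    "transpose Q + Q - transpose M ** H ** M = G"
proof -
  define Mi where "Mi \<equiv> block3 (mat 1) 0 ((1 / (e * r)) *\<^sub>R transpose D1)
                               0 (mat 1) ((1 / (e * r)) *\<^sub>R transpose D2)
                               0 0 (mat 1)"
  have MMi: "M ** Mi = mat 1"
    apply (rule matrix_eq_wvec)
    by (simp add: M_def Mi_def mvs)
  moreover have MiM: "Mi ** M = mat 1"
    apply (rule matrix_eq_wvec)
    by (simp add: M_def Mi_def mvs)
  ultimately show inv: "invertible M" unfolding invertible_def by blast
  show QHM: "Q = H ** M"
    apply (rule matrix_eq_wvec)
    using r by (simp add: M_def Q_def H_def mvs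
       algebra_simps)
  show "Q ** matrix_inv M = H"
  proof -
    have "M ** matrix_inv M = mat 1" unfolding matrix_inv_def
      using someI[of "\<lambda>A'. M ** A' = mat 1 \<and> A' ** M = mat 1" Mi] MMi MiM by blast
    then show ?thesis by (simp add: QHM matrix_mul_assoc[symmetric])
  qed
  show "transpose H = H"
    by (simp add: H_def transpose_block3 transpose_scaleR transpose_zero)
  show "transpose Q + Q - transpose M ** H ** M = G"
    apply (rule matrix_eq_wvec)
    using r e by (simp add: M_def Q_def H_def G_def mvs
       transpose_block3 transpose_scaleR transpose_zero transpose_minus
       matrix_vector_mult_add_rdistrib matrix_vector_mult_diff_rdistrib wvec_add wvec_diff
       algebra_simps power2_eq_square)
qed



lemma transpose_add': "transpose ((A::real^'a::finite^'b::finite) + B) = transpose A + transpose B"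
  by (simp add: transpose_def vec_eq_iff)
lemma transpose_diff': "transpose ((A::real^'a::finite^'b::finite) - B) = transpose A - transpose B"
  by (simp add: transpose_def vec_eq_iff)

lemma norm_transpose_mv:
  fixes A :: "real^'a::finite^'b::finite"
  shows "norm (transpose A *v c) \<le> specnorm A * norm c"
proof -
  define y where "y = transpose A *v c"
  have "(norm y)\<^sup>2 = y \<bullet> (transpose A *v c)" by (simp add: y_def power2_norm_eq_inner)
  also have "\<dots> = (A *v y) \<bullet> c" by (rule inner_transpose)
  also have "\<dots> \<le> norm (A *v y) * norm c" by (rule norm_cauchy_schwarz)
  also have "\<dots> \<le> (specnorm A * norm y) * norm c"
    apply (rule mult_right_mono)
    using onorm[OF matrix_vector_mul_bounded_linear, of A y] by (auto simp: specnorm_def)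
  finally have *: "(norm y)\<^sup>2 \<le> specnorm A * norm c * norm y" by (simp add: algebra_simps)
  show ?thesis
  proof (cases "norm y = 0")
    case True
    have "0 \<le> specnorm A" unfolding specnorm_def
      by (rule onorm_pos_le[OF matrix_vector_mul_bounded_linear])
    then show ?thesis using True y_def by simp
  next
    case False
    then have "norm y > 0" by simp
    with * show ?thesis unfolding y_def[symmetric] by (simp add: power2_eq_square)
  qed
qed

lemma inner_AAt: "c \<bullet> ((A ** transpose A) *v c) = (norm (transpose A *v c))\<^sup>2"
  for A :: "real^'a::finite^'b::finite"
  by (metis inner_transpose inner_commute matrix_vector_mul_assoc power2_norm_eq_inner transpose_transpose)

lemma pos3: "0 \<le> x \<Longrightarrow> 0 \<le> y \<Longrightarrow> 0 \<le> z \<Longrightarrow> (0<x \<or> 0<y \<or> 0<z) \<Longrightarrow> 0 < x+y+(z::real)"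
  by linarith

lemma pos3v: "r > 0 \<Longrightarrow> t > 0 \<Longrightarrow> (a \<noteq> 0 \<or> b \<noteq> 0 \<or> c \<noteq> 0) \<Longrightarrow>
   0 < r * (a \<bullet> a) + r * (b \<bullet> b) + t * ((c::'a::real_inner) \<bullet> c)"
  apply (rule pos3)
  by (auto simp: inner_gt_zero_iff)

lemma posdef_HG:
  fixes D1 :: "real^'n::finite^'p::finite" and D2 :: "real^'m::finite^'p"
    and H G :: "real^('n+('m+'p))^('n+('m+'p))"
  assumes r: "r > 0" and e: "e > 0" and s: "s > (1 / (e\<^sup>2 * r)) * ((specnorm D1)\<^sup>2 + (specnorm D2)\<^sup>2)"
  defines "H \<equiv> block3 (r *\<^sub>R mat 1) 0 0 0 (r *\<^sub>R mat 1) 0 0 0 (s *\<^sub>R mat 1)"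
  and "G \<equiv> block3 (r *\<^sub>R mat 1) 0 0 0 (r *\<^sub>R mat 1) 0 0 0
                   (s *\<^sub>R mat 1 - (1 / (e\<^sup>2 * r)) *\<^sub>R
                      (D1 ** transpose D1 + D2 ** transpose D2))"
  shows "posdef H" "posdef G"
proof -
  define k where "k = 1 / (e\<^sup>2 * r)"
  have k: "k > 0" using r e by (simp add: k_def)
  have s0: "s > 0"
    by (rule le_less_trans[OF _ s]) (use k k_def in simp)
  show "posdef H" unfolding posdef_def
  proof (intro conjI allI impI)
    show "transpose H = H" by (simp add: H_def mvs)
    fix v :: "real^('n+('m+'p))" assume v: "v \<noteq> 0"
    obtain a b c where vd: "v = wvec a b c" using wvec_surj by blast
    have "a \<noteq> 0 \<or> b \<noteq> 0 \<or> c \<noteq> 0" using v vd wvec_zero by auto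
    then have "r * (a \<bullet> a) + r * (b \<bullet> b) + s * (c \<bullet> c) > 0"
      by (rule pos3v[OF r s0])
    then show "v \<bullet> (H *v v) > 0"
      by (simp add: vd H_def mvs wvec_inner)
  qed
  show "posdef G" unfolding posdef_def
  proof (intro conjI allI impI)
    show "transpose G = G"
      unfolding G_def transpose_block3
      by (simp only: transpose_add' transpose_diff' matrix_transpose_mul transpose_scaleR transpose_zero
           transpose_mat transpose_transpose)
    fix v :: "real^('n+('m+'p))" assume v: "v \<noteq> 0"
    obtain a b c where vd: "v = wvec a b c" using wvec_surj by blast
    have nz: "a \<noteq> 0 \<or> b \<noteq> 0 \<or> c \<noteq> 0" using v vd wvec_zero by auto
    have cG: "c \<bullet> ((s *\<^sub>R mat 1 - k *\<^sub>R (D1 ** transpose D1 + D2 ** transpose D2)) *v c)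
        = s * (norm c)\<^sup>2 - k * ((norm (transpose D1 *v c))\<^sup>2 + (norm (transpose D2 *v c))\<^sup>2)"
      by (simp add: mv_diff mv_add mv_scaleR inner_diff_right inner_add_right inner_AAt
          power2_norm_eq_inner[symmetric] algebra_simps)
    have b1: "(norm (transpose D1 *v c))\<^sup>2 \<le> (specnorm D1)\<^sup>2 * (norm c)\<^sup>2"
      using norm_transpose_mv[of D1 c] by (metis norm_ge_zero power_mono power_mult_distrib)
    have b2: "(norm (transpose D2 *v c))\<^sup>2 \<le> (specnorm D2)\<^sup>2 * (norm c)\<^sup>2"
      using norm_transpose_mv[of D2 c] by (metis norm_ge_zero power_mono power_mult_distrib)
    have "k * ((norm (transpose D1 *v c))\<^sup>2 + (norm (transpose D2 *v c))\<^sup>2)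
        \<le> k * ((specnorm D1)\<^sup>2 + (specnorm D2)\<^sup>2) * (norm c)\<^sup>2"
    proof -
      have "(norm (transpose D1 *v c))\<^sup>2 + (norm (transpose D2 *v c))\<^sup>2
          \<le> ((specnorm D1)\<^sup>2 + (specnorm D2)\<^sup>2) * (norm c)\<^sup>2"
        using b1 b2 by (simp add: distrib_right)
      from mult_left_mono[OF this, of k] k show ?thesis by (simp add: mult.assoc)
    qed
    then have cpos: "c \<bullet> ((s *\<^sub>R mat 1 - k *\<^sub>R (D1 ** transpose D1 + D2 ** transpose D2)) *v c)
        \<ge> (s - k * ((specnorm D1)\<^sup>2 + (specnorm D2)\<^sup>2)) * (norm c)\<^sup>2"
      unfolding cG by (simp add: algebra_simps)
    have sk: "s - k * ((specnorm D1)\<^sup>2 + (specnorm D2)\<^sup>2) > 0" using s k_def by simp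
    have "r * (a \<bullet> a) + r * (b \<bullet> b) + c \<bullet> ((s *\<^sub>R mat 1 - k *\<^sub>R (D1 ** transpose D1 + D2 ** transpose D2)) *v c) > 0"
    proof -
      have "r * (a \<bullet> a) + r * (b \<bullet> b) + (s - k * ((specnorm D1)\<^sup>2 + (specnorm D2)\<^sup>2)) * (norm c)\<^sup>2 > 0"
        using pos3v[OF r sk nz] by (simp add: power2_norm_eq_inner)
      then show ?thesis using cpos by linarith
    qed
    then show "v \<bullet> (G *v v) > 0"
      by (simp add: vd G_def k_def mvs wvec_inner del: transpose_matrix_vector)
  qed
qed



lemma mv_neg: "A *v (- x) = - (A *v (x::real^'a::finite))"
  by (simp add: matrix_vector_mult_def vec_eq_iff sum_negf)

lemma three_point:
  fixes H Q M G :: "real^'a::finite^'a"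
  assumes Hs: "transpose H = H" and QHM: "Q = H ** M"
    and G: "G = transpose Q + Q - transpose M ** H ** M" and W1: "W1 = Wk - M *v (Wk - Wb)"
  shows "(w - Wb) \<bullet> (Q *v (Wk - Wb)) = 1/2*(qf H (w - W1) - qf H (w - Wk)) + 1/2 * qf G (Wb - Wk)"
proof -
  define a where "a = w - Wk"
  define e where "e = Wk - Wb"
  have w1: "w - W1 = a + M *v e" by (simp add: W1 a_def e_def)
  have wb: "w - Wb = a + e" by (simp add: a_def e_def)
  have be: "Wb - Wk = - e" by (simp add: e_def)
  have Qe: "Q *v e = H *v (M *v e)" by (simp add: QHM matrix_vector_mul_assoc)
  have sym: "(M *v e) \<bullet> (H *v a) = a \<bullet> (H *v (M *v e))"
    by (metis Hs inner_commute inner_transpose)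
  have q1: "qf H (w - W1) = a \<bullet> (H *v a) + 2 * (a \<bullet> (Q *v e)) + (M *v e) \<bullet> (H *v (M *v e))"
    unfolding w1 qf_def Qe
    by (simp add: matrix_vector_right_distrib inner_add_left inner_add_right sym)
  have q2: "qf H (w - Wk) = a \<bullet> (H *v a)" by (simp add: qf_def a_def)
  have tq: "e \<bullet> (transpose Q *v e) = e \<bullet> (Q *v e)"
    by (metis inner_commute inner_transpose)
  have tm: "e \<bullet> ((transpose M ** H ** M) *v e) = (M *v e) \<bullet> (H *v (M *v e))"
    by (metis inner_transpose matrix_vector_mul_assoc)
  have q3: "qf G (Wb - Wk) = 2 * (e \<bullet> (Q *v e)) - (M *v e) \<bullet> (H *v (M *v e))"
    unfolding be qf_def G
    by (simp add: mv_neg matrix_vector_mult_diff_rdistrib matrix_vector_mult_add_rdistrib inner_diff_right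
        inner_add_right tq tm del: transpose_matrix_vector)
  show ?thesis unfolding q1 q2 q3 wb e_def[symmetric]
    by (simp add: inner_add_left algebra_simps)
qed

lemma foc:
  fixes f :: "real^'n::finite \<Rightarrow> real" and Phi :: "real^'n \<Rightarrow> real^'p::finite"
  assumes f: "convex_on UNIV f" and der: "(Phi has_derivative (\<lambda>h. D *v h)) (at z0)"
    and X: "convex X" "z0 \<in> X" "z \<in> X" and rho: "rho \<ge> 0"
    and opt: "\<forall>z\<in>X. rho * f z0 + c * (lam \<bullet> Phi z0) + r / 2 * (norm (z0 - xk))\<^sup>2
        \<le> rho * f z + c * (lam \<bullet> Phi z) + r / 2 * (norm (z - xk))\<^sup>2"
  shows "rho * (f z - f z0) + c * (lam \<bullet> (D *v (z - z0))) + r * ((z - z0) \<bullet> (z0 - xk)) \<ge> 0"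
proof -
  define d where "d = z - z0"
  define psi where "psi t = lam \<bullet> Phi (z0 + t *\<^sub>R d)" for t :: real
  define L where "L = lam \<bullet> (D *v d)"
  have "((\<lambda>t. z0 + t *\<^sub>R d) has_derivative (\<lambda>t. t *\<^sub>R d)) (at 0)"
    by (auto intro!: derivative_eq_intros)
  then have "((\<lambda>t. Phi (z0 + t *\<^sub>R d)) has_derivative (\<lambda>t. D *v (t *\<^sub>R d))) (at 0)"
    using has_derivative_compose[of "\<lambda>t. z0 + t *\<^sub>R d" "\<lambda>t. t *\<^sub>R d" 0 UNIV Phi "\<lambda>h. D *v h"] der
    by simp
  then have "(psi has_derivative (\<lambda>t. lam \<bullet> (D *v (t *\<^sub>R d)))) (at 0)"
    unfolding psi_def by (auto intro: has_derivative_inner_right)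
  moreover have "(\<lambda>t. lam \<bullet> (D *v (t *\<^sub>R d))) = (\<lambda>t. t * L)"
    by (simp add: L_def matrix_vector_mult_scaleR del: transpose_matrix_vector)
  moreover have "(\<lambda>t. t * L) = (*) L" by (auto simp: fun_eq_iff mult.commute)
  ultimately have "(psi has_field_derivative L) (at 0)"
    by (simp add: has_field_derivative_def)
  then have lim0: "((\<lambda>t. (psi t - psi 0) / (t - 0)) \<longlongrightarrow> L) (at 0)"
    using has_field_derivative_iff by blast
  have lim: "((\<lambda>t. (psi t - psi 0) / t) \<longlongrightarrow> L) (at_right 0)"
    using tendsto_mono[OF at_le[OF subset_UNIV] lim0] by simp
  define phi where "phi t = rho * (f z - f z0) + c * ((psi t - psi 0) / t) + r * (d \<bullet> (z0 - xk))
      + r * t / 2 * (norm d)\<^sup>2" for t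
  have "(phi \<longlongrightarrow> rho * (f z - f z0) + c * L + r * (d \<bullet> (z0 - xk)) + r * 0 / 2 * (norm d)\<^sup>2) (at_right 0)"
    unfolding phi_def by (intro tendsto_intros lim) simp
  then have limphi: "(phi \<longlongrightarrow> rho * (f z - f z0) + c * L + r * (d \<bullet> (z0 - xk))) (at_right 0)"
    by simp
  have pt: "phi t \<ge> 0" if t: "0 < t" "t < 1" for t
  proof -
    define zt where "zt = z0 + t *\<^sub>R d"
    have zt': "zt = (1 - t) *\<^sub>R z0 + t *\<^sub>R z" by (simp add: zt_def d_def algebra_simps)
    have ztX: "zt \<in> X" unfolding zt' using X t by (intro convexD) auto
    have fzt: "f zt \<le> (1 - t) * f z0 + t * f z" unfolding zt'
      using convex_onD[OF f, of t z0 z] t by simp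
    have o: "rho * f z0 + c * psi 0 + r / 2 * (norm (z0 - xk))\<^sup>2
        \<le> rho * f zt + c * psi t + r / 2 * (norm (zt - xk))\<^sup>2"
      using opt ztX by (simp add: psi_def zt_def)
    have n: "(norm (zt - xk))\<^sup>2 = (norm (z0 - xk))\<^sup>2 + 2 * t * (d \<bullet> (z0 - xk)) + t\<^sup>2 * (norm d)\<^sup>2"
    proof -
      have ze: "zt - xk = (z0 - xk) + t *\<^sub>R d" by (simp add: zt_def algebra_simps)
      have "(norm (zt - xk))\<^sup>2 = (norm ((z0 - xk) + t *\<^sub>R d))\<^sup>2" by (simp only: ze)
      also have "\<dots> = (norm (z0 - xk))\<^sup>2 + 2 * t * (d \<bullet> (z0 - xk)) + t\<^sup>2 * (norm d)\<^sup>2"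
        by (simp only: power2_norm_eq_inner)
          (simp add: inner_add_left inner_add_right inner_commute algebra_simps power2_eq_square)
      finally show ?thesis .
    qed
    have rf: "rho * f zt \<le> rho * ((1 - t) * f z0 + t * f z)"
      by (rule mult_left_mono[OF fzt rho])
    have "0 \<le> t * (rho * (f z - f z0)) + c * (psi t - psi 0) + r * t * (d \<bullet> (z0 - xk)) + r * t\<^sup>2 / 2 * (norm d)\<^sup>2"
      using o n rf by (simp add: algebra_simps)
    also have "\<dots> = t * phi t"
      using t by (simp add: phi_def field_simps power2_eq_square)
    finally show ?thesis using t by (simp add: zero_le_mult_iff)
  qed
  have ev: "eventually (\<lambda>t. 0 \<le> phi t) (at_right 0)"
    unfolding eventually_at_right_field by (rule exI[of _ 1]) (auto intro: pt)
  have "0 \<le> rho * (f z - f z0) + c * L + r * (d \<bullet> (z0 - xk))"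
    by (rule tendsto_lowerbound[OF limphi ev]) simp
  then show ?thesis by (simp add: L_def d_def)
qed

lemma proj:
  fixes l lb lam cc :: "real^'p::finite"
  assumes l: "\<And>i. l $ i \<ge> 0" and q: "q > 0"
    and lb: "lb = (\<chi> i. max (lam $ i + q * cc $ i) 0)"
  shows "(l - lb) \<bullet> (lb - lam) \<ge> q * ((l - lb) \<bullet> cc)"
proof -
  have "q * ((l - lb) $ i * cc $ i) \<le> (l - lb) $ i * (lb - lam) $ i" for i
  proof (cases "lam $ i + q * cc $ i \<le> 0")
    case True
    then have "lb $ i = 0" by (simp add: lb)
    moreover have "0 \<le> l $ i * (- (lam $ i + q * cc $ i))" using l[of i] True by simp
    ultimately show ?thesis by (simp add: algebra_simps)
  next
    case False
    then have "lb $ i = lam $ i + q * cc $ i" by (simp add: lb)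
    then show ?thesis by (simp add: algebra_simps)
  qed
  then have "(\<Sum>i\<in>UNIV. q * ((l - lb) $ i * cc $ i)) \<le> (\<Sum>i\<in>UNIV. (l - lb) $ i * (lb - lam) $ i)"
    by (rule sum_mono)
  then show ?thesis by (simp add: inner_vec_def sum_distrib_left)
qed



theorem lemma4p2:
  fixes X :: "(real^'n::finite) set" and Y :: "(real^'m::finite) set"
    and f :: "real^'n \<Rightarrow> real" and g :: "real^'m \<Rightarrow> real"
    and Phi :: "real^'n \<Rightarrow> real^'p::finite" and Psi :: "real^'m \<Rightarrow> real^'p"
    and DPhi :: "real^'n \<Rightarrow> real^'n^'p" and DPsi :: "real^'m \<Rightarrow> real^'m^'p"
    and rho mu :: real and eta :: "nat \<Rightarrow> real"
    and x xb :: "nat \<Rightarrow> real^'n" and y yb :: "nat \<Rightarrow> real^'m"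
    and lam lb :: "nat \<Rightarrow> real^'p"
    and R :: "real^'n \<Rightarrow> real^'m \<Rightarrow> real"
    and r s :: "nat \<Rightarrow> real"
    and W Wb :: "nat \<Rightarrow> real^('n + ('m + 'p))"
    and Gam :: "real^'n \<Rightarrow> real^'m \<Rightarrow> real^'p \<Rightarrow> real^('n + ('m + 'p))"
    and M Q H G :: "nat \<Rightarrow> real^('n + ('m + 'p))^('n + ('m + 'p))"
  assumes X: "X \<noteq> {}" "closed X" "convex X"
    and Y: "Y \<noteq> {}" "closed Y" "convex Y"
    and f: "convex_on UNIV f" and g: "convex_on UNIV g"
    and Phi_cvx: "\<And>i. convex_on UNIV (\<lambda>z. Phi z $ i)"
    and Psi_cvx: "\<And>i. convex_on UNIV (\<lambda>z. Psi z $ i)"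
    and Phi_der: "\<And>z. (Phi has_derivative (\<lambda>h. DPhi z *v h)) (at z)"
    and Psi_der: "\<And>z. (Psi has_derivative (\<lambda>h. DPsi z *v h)) (at z)"
    and DPhi_cont: "continuous_on UNIV DPhi" and DPsi_cont: "continuous_on UNIV DPsi"
    and rho: "rho > 0" and mu: "mu > 1" and eta: "\<And>k. eta k > 0"
    and w0: "x 0 \<in> X" "y 0 \<in> Y" "\<And>i. lam 0 $ i \<ge> 0"
    and R_def: "R \<equiv> \<lambda>u v. (specnorm (DPhi u))\<^sup>2 + (specnorm (DPsi v))\<^sup>2"
    and Rpos: "\<And>k. R (x k) (y k) > 0" "\<And>k. R (xb k) (yb k) > 0"
    and r_def: "r \<equiv> \<lambda>k. (1 / eta k) * sqrt (R (x k) (y k))"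
    and xb: "\<And>k. xb k \<in> X \<and> (\<forall>z\<in>X.
        rho * f (xb k) + (1 / eta k) * (lam k \<bullet> Phi (xb k)) + r k / 2 * (norm (xb k - x k))\<^sup>2
        \<le> rho * f z + (1 / eta k) * (lam k \<bullet> Phi z) + r k / 2 * (norm (z - x k))\<^sup>2)"
    and yb: "\<And>k. yb k \<in> Y \<and> (\<forall>z\<in>Y.
        rho * g (yb k) + (1 / eta k) * (lam k \<bullet> Psi (yb k)) + r k / 2 * (norm (yb k - y k))\<^sup>2
        \<le> rho * g z + (1 / eta k) * (lam k \<bullet> Psi z) + r k / 2 * (norm (z - y k))\<^sup>2)"
    and s_def: "s \<equiv> \<lambda>k. mu * R (xb k) (yb k) / (eta k * sqrt (R (x k) (y k)))"
    and lb: "\<And>k. lb k = (\<chi> i. max (lam k $ i + (1 / (eta k * s k)) * (Phi (xb k) $ i + Psi (yb k) $ i)) 0)"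
    and W_def: "W \<equiv> \<lambda>k. wvec (x k) (y k) (lam k)"
    and Wb_def: "Wb \<equiv> \<lambda>k. wvec (xb k) (yb k) (lb k)"
    and M_def: "M \<equiv> \<lambda>k. block3 (mat 1) 0 (- (1 / (eta k * r k)) *\<^sub>R transpose (DPhi (xb k)))
                               0 (mat 1) (- (1 / (eta k * r k)) *\<^sub>R transpose (DPsi (yb k)))
                               0 0 (mat 1)"
    and update: "\<And>k. W (Suc k) = W k - M k *v (W k - Wb k)"
    and Q_def: "Q \<equiv> \<lambda>k. block3 (r k *\<^sub>R mat 1) 0 (- (1 / eta k) *\<^sub>R transpose (DPhi (xb k)))
                               0 (r k *\<^sub>R mat 1) (- (1 / eta k) *\<^sub>R transpose (DPsi (yb k)))
                               0 0 (s k *\<^sub>R mat 1)"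
    and H_def: "H \<equiv> \<lambda>k. block3 (r k *\<^sub>R mat 1) 0 0 0 (r k *\<^sub>R mat 1) 0 0 0 (s k *\<^sub>R mat 1)"
    and G_def: "G \<equiv> \<lambda>k. block3 (r k *\<^sub>R mat 1) 0 0 0 (r k *\<^sub>R mat 1) 0 0 0
                   (s k *\<^sub>R mat 1 - (1 / ((eta k)\<^sup>2 * r k)) *\<^sub>R
                      (DPhi (xb k) ** transpose (DPhi (xb k)) + DPsi (yb k) ** transpose (DPsi (yb k))))"
    and Gam_def: "Gam \<equiv> \<lambda>u v l. wvec (transpose (DPhi u) *v l) (transpose (DPsi v) *v l) (- Phi u - Psi v)"
  shows "\<forall>k. invertible (M k)
           \<and> Q k ** matrix_inv (M k) = H k \<and> posdef (H k)
           \<and> transpose (Q k) + Q k - transpose (M k) ** H k ** M k = G k \<and> posdef (G k)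
           \<and> (\<forall>u\<in>X. \<forall>v\<in>Y. \<forall>l. (\<forall>i. l $ i \<ge> 0) \<longrightarrow>
                rho * ((f u + g v) - (f (xb k) + g (yb k)))
                  + (wvec u v l - Wb k) \<bullet> ((1 / eta k) *\<^sub>R Gam (xb k) (yb k) (lb k))
                \<ge> 1/2 * (qf (H k) (wvec u v l - W (Suc k)) - qf (H k) (wvec u v l - W k))
                  + 1/2 * qf (G k) (Wb k - W k))"
proof (intro allI)
  fix k
  define D1 where "D1 = DPhi (xb k)"
  define D2 where "D2 = DPsi (yb k)"
  define e where "e = eta k"
  have e: "e > 0" using eta by (simp add: e_def)
  have Ru: "R (x k) (y k) > 0" and Rb: "R (xb k) (yb k) > 0" using Rpos by auto
  have rk: "r k = sqrt (R (x k) (y k)) / e" by (simp add: r_def e_def)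
  have rpos: "r k > 0" using rk e Ru by simp
  have sk: "s k = mu * R (xb k) (yb k) / (e * sqrt (R (x k) (y k)))" by (simp add: s_def e_def)
  have spos: "s k > 0" using sk e Ru Rb mu by simp
  have RbD: "R (xb k) (yb k) = (specnorm D1)\<^sup>2 + (specnorm D2)\<^sup>2" by (simp add: R_def D1_def D2_def)
  have kk: "1 / (e\<^sup>2 * r k) = 1 / (e * sqrt (R (x k) (y k)))"
    using e by (simp add: rk power2_eq_square)
  have sbig: "s k > (1 / (e\<^sup>2 * r k)) * ((specnorm D1)\<^sup>2 + (specnorm D2)\<^sup>2)"
  proof -
    have p: "1 / (e * sqrt (R (x k) (y k))) * R (xb k) (yb k) > 0" using e Ru Rb by simp
    have "s k = mu * (1 / (e * sqrt (R (x k) (y k))) * R (xb k) (yb k))" by (simp add: sk)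
    also have "\<dots> > 1 * (1 / (e * sqrt (R (x k) (y k))) * R (xb k) (yb k))"
      using mu p by (intro mult_strict_right_mono) auto
    finally show ?thesis by (simp add: kk RbD)
  qed
  have Mk: "M k = block3 (mat 1) 0 (- (1 / (e * r k)) *\<^sub>R transpose D1)
                               0 (mat 1) (- (1 / (e * r k)) *\<^sub>R transpose D2)
                               0 0 (mat 1)" by (simp add: M_def D1_def D2_def e_def)
  have Qk: "Q k = block3 (r k *\<^sub>R mat 1) 0 (- (1 / e) *\<^sub>R transpose D1)
                               0 (r k *\<^sub>R mat 1) (- (1 / e) *\<^sub>R transpose D2)
                               0 0 (s k *\<^sub>R mat 1)" by (simp add: Q_def D1_def D2_def e_def)
  have Hk: "H k = block3 (r k *\<^sub>R mat 1) 0 0 0 (r k *\<^sub>R mat 1) 0 0 0 (s k *\<^sub>R mat 1)"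
    by (simp add: H_def)
  have Gk: "G k = block3 (r k *\<^sub>R mat 1) 0 0 0 (r k *\<^sub>R mat 1) 0 0 0
                   (s k *\<^sub>R mat 1 - (1 / (e\<^sup>2 * r k)) *\<^sub>R
                      (D1 ** transpose D1 + D2 ** transpose D2))"
    by (simp add: G_def D1_def D2_def e_def)
  note MF1 = M_facts(1,2,3,5)[where ?D1.0=D1 and ?D2.0=D2, OF rpos spos e, folded Mk Qk Hk Gk]
  have MF4: "transpose (H k) = H k" unfolding Hk by (rule M_facts(4)[OF rpos spos e])
  note PD = posdef_HG[where ?D1.0=D1 and ?D2.0=D2, OF rpos e sbig, folded Hk Gk]
  have ineq: "rho * ((f u + g v) - (f (xb k) + g (yb k)))
                  + (wvec u v l - Wb k) \<bullet> ((1 / eta k) *\<^sub>R Gam (xb k) (yb k) (lb k))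
                \<ge> 1/2 * (qf (H k) (wvec u v l - W (Suc k)) - qf (H k) (wvec u v l - W k))
                  + 1/2 * qf (G k) (Wb k - W k)"
    if u: "u \<in> X" and v: "v \<in> Y" and l: "\<forall>i. l $ i \<ge> 0" for u v l
  proof -
    have tp: "(wvec u v l - Wb k) \<bullet> (Q k *v (W k - Wb k)) =
       1/2 * (qf (H k) (wvec u v l - W (Suc k)) - qf (H k) (wvec u v l - W k)) + 1/2 * qf (G k) (Wb k - W k)"
      by (rule three_point[OF MF4 MF1(2) MF1(4)[symmetric] update])
    define a1 where "a1 = u - xb k"
    define a2 where "a2 = v - yb k"
    define a3 where "a3 = l - lb k"
    define e1 where "e1 = x k - xb k"
    define e2 where "e2 = y k - yb k"
    define e3 where "e3 = lam k - lb k"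
    define cc where "cc = Phi (xb k) + Psi (yb k)"
    have Qv: "(wvec u v l - Wb k) \<bullet> (Q k *v (W k - Wb k)) =
       r k * (a1 \<bullet> e1) - (1/e) * (a1 \<bullet> (transpose D1 *v e3)) + r k * (a2 \<bullet> e2)
         - (1/e) * (a2 \<bullet> (transpose D2 *v e3)) + s k * (a3 \<bullet> e3)"
      by (simp add: Qk W_def Wb_def wvec_diff block3_mv mv_scaleR mv_uminus wvec_inner
          a1_def a2_def a3_def e1_def e2_def e3_def inner_diff_right inner_add_right
          del: transpose_matrix_vector)
    have Lv: "(wvec u v l - Wb k) \<bullet> ((1 / eta k) *\<^sub>R Gam (xb k) (yb k) (lb k)) =
       (1/e) * (a1 \<bullet> (transpose D1 *v lb k)) + (1/e) * (a2 \<bullet> (transpose D2 *v lb k)) - (1/e) * (a3 \<bullet> cc)"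
      by (simp add: Gam_def Wb_def wvec_diff wvec_scaleR wvec_inner e_def D1_def D2_def cc_def
          a1_def a2_def a3_def inner_diff_right inner_add_right algebra_simps
          del: transpose_matrix_vector)
    have A: "rho * (f u - f (xb k)) + (1/e) * (lam k \<bullet> (D1 *v a1)) + r k * (a1 \<bullet> (xb k - x k)) \<ge> 0"
      unfolding a1_def D1_def e_def
      by (rule foc[OF f Phi_der X(3) conjunct1[OF xb] u]) (use rho xb in auto)
    have B: "rho * (g v - g (yb k)) + (1/e) * (lam k \<bullet> (D2 *v a2)) + r k * (a2 \<bullet> (yb k - y k)) \<ge> 0"
      unfolding a2_def D2_def e_def
      by (rule foc[OF g Psi_der Y(3) conjunct1[OF yb] v]) (use rho yb in auto)
    have q: "1 / (e * s k) > 0" using e spos by simp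
    have C0: "a3 \<bullet> (lb k - lam k) \<ge> (1 / (e * s k)) * (a3 \<bullet> cc)"
      unfolding a3_def
      by (rule proj[OF _ q]) (use l in \<open>auto simp: lb cc_def e_def\<close>)
    have C: "s k * (a3 \<bullet> (lb k - lam k)) \<ge> (1/e) * (a3 \<bullet> cc)"
    proof -
      have "s k * (a3 \<bullet> (lb k - lam k)) \<ge> s k * ((1 / (e * s k)) * (a3 \<bullet> cc))"
        by (rule mult_left_mono[OF C0]) (use spos in simp)
      also have "s k * ((1 / (e * s k)) * (a3 \<bullet> cc)) = (1/e) * (a3 \<bullet> cc)" using spos by simp
      finally show ?thesis .
    qed
    have i1: "a1 \<bullet> (transpose D1 *v e3) = lam k \<bullet> (D1 *v a1) - a1 \<bullet> (transpose D1 *v lb k)"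
      unfolding e3_def by (simp add: inner_transpose inner_diff_right inner_commute del: transpose_matrix_vector)
    have i2: "a2 \<bullet> (transpose D2 *v e3) = lam k \<bullet> (D2 *v a2) - a2 \<bullet> (transpose D2 *v lb k)"
      unfolding e3_def by (simp add: inner_transpose inner_diff_right inner_commute del: transpose_matrix_vector)
    have i3: "a1 \<bullet> (xb k - x k) = - (a1 \<bullet> e1)" unfolding e1_def by (simp add: inner_diff_right)
    have i4: "a2 \<bullet> (yb k - y k) = - (a2 \<bullet> e2)" unfolding e2_def by (simp add: inner_diff_right)
    have i5: "a3 \<bullet> e3 = - (a3 \<bullet> (lb k - lam k))" unfolding e3_def by (simp add: inner_diff_right)
    have "rho * ((f u + g v) - (f (xb k) + g (yb k)))
                  + (wvec u v l - Wb k) \<bullet> ((1 / eta k) *\<^sub>R Gam (xb k) (yb k) (lb k))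
          \<ge> (wvec u v l - Wb k) \<bullet> (Q k *v (W k - Wb k))"
      unfolding Qv Lv i1 i2 i5 using A B C unfolding i3 i4 by (simp add: algebra_simps)
    then show ?thesis unfolding tp .
  qed
  show "invertible (M k)
           \<and> Q k ** matrix_inv (M k) = H k \<and> posdef (H k)
           \<and> transpose (Q k) + Q k - transpose (M k) ** H k ** M k = G k \<and> posdef (G k)
           \<and> (\<forall>u\<in>X. \<forall>v\<in>Y. \<forall>l. (\<forall>i. l $ i \<ge> 0) \<longrightarrow>
                rho * ((f u + g v) - (f (xb k) + g (yb k)))
                  + (wvec u v l - Wb k) \<bullet> ((1 / eta k) *\<^sub>R Gam (xb k) (yb k) (lb k))
                \<ge> 1/2 * (qf (H k) (wvec u v l - W (Suc k)) - qf (H k) (wvec u v l - W k))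
                  + 1/2 * qf (G k) (Wb k - W k))"
    using MF1 MF4 PD ineq by blast
qed

end
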